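(* Let $G\subset\mathrm{Homeo}_+([0,1])$ be a group which has linked fixed points (i.e. is not without linked fixed points). Then there exist $h_1,h_2\in G$ and a segment $I\subset[0,1]$ such that $h_1(I)$ and $h_2(I)$ are disjoint segments contained in $I$.
   Context: For a group $G$ of homeomorphisms of $[0,1]$, a pair of successive fixed points of $G$ is a pair $\{a,b\}$, $a<b$, such that $(a,b)$ is a connected component of $[0,1]\setminus \mathrm{Fix}(g)$ for some $g\in G$. Two pairs $\{a,b\}$ and $\{c,d\}$ are linked if $(a,b)\cap\{c,d\}$ or $(c,d)\cap\{a,b\}$ consists of exactly one point. $G$ has linked fixed points if some two pairs of successive fixed points of $G$ are linked. *)

theory Defs
  imports "HOL-Analysis.Analysis"
begin

text \<open>Orientation-preserving homeomorphisms of [0,1], as real functions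
  considered on {0..1} (values outside {0..1} are irrelevant).\<close>
definition homeo_plus01 :: "(real \<Rightarrow> real) \<Rightarrow> bool" where
  "homeo_plus01 g \<longleftrightarrow> (\<exists>g'. homeomorphism {0..1} {0..1} g g') \<and> strict_mono_on {0..1} g"

text \<open>A subgroup of Homeo_+([0,1]); elements are identified when they agree on {0..1}.\<close>
definition homeo_group01 :: "(real \<Rightarrow> real) set \<Rightarrow> bool" where
  "homeo_group01 G \<longleftrightarrow>
     (\<forall>g\<in>G. homeo_plus01 g) \<and>
     (\<exists>e\<in>G. \<forall>x\<in>{0..1}. e x = x) \<and>
     (\<forall>g\<in>G. \<forall>h\<in>G. \<exists>k\<in>G. \<forall>x\<in>{0..1}. k x = g (h x)) \<and>
     (\<forall>g\<in>G. \<exists>k\<in>G. \<forall>x\<in>{0..1}. k (g x) = x)"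

definition Fix01 :: "(real \<Rightarrow> real) \<Rightarrow> real set" where
  "Fix01 g = {x \<in> {0..1}. g x = x}"

definition succ_fixed_pair :: "(real \<Rightarrow> real) set \<Rightarrow> real \<Rightarrow> real \<Rightarrow> bool" where
  "succ_fixed_pair G a b \<longleftrightarrow> a < b \<and>
     (\<exists>g\<in>G. {a<..<b} \<in> components ({0..1} - Fix01 g))"

definition linked_pairs :: "real \<Rightarrow> real \<Rightarrow> real \<Rightarrow> real \<Rightarrow> bool" where
  "linked_pairs a b c d \<longleftrightarrow>
     card ({a<..<b} \<inter> {c, d}) = 1 \<or> card ({c<..<d} \<inter> {a, b}) = 1"

definition has_linked_fixed_points :: "(real \<Rightarrow> real) set \<Rightarrow> bool" where
  "has_linked_fixed_points G \<longleftrightarrow>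
     (\<exists>a b c d. succ_fixed_pair G a b \<and> succ_fixed_pair G c d \<and> linked_pairs a b c d)"

end

theory Submission
  imports Defs
begin

lemma G_mono:
  assumes "homeo_group01 G" "g \<in> G" shows "strict_mono_on {0..1} g"
  using assms unfolding homeo_group01_def homeo_plus01_def by blast

lemma G_cont:
  assumes "homeo_group01 G" "g \<in> G" shows "continuous_on {0..1} g"
  using assms unfolding homeo_group01_def homeo_plus01_def homeomorphism_def by blast

lemma G_range:
  assumes "homeo_group01 G" "g \<in> G" "x \<in> {0..1}" shows "g x \<in> {0..1}"
proof -
  obtain g' where "homeomorphism {0..1} {0..1} g g'"
    using assms unfolding homeo_group01_def homeo_plus01_def by blast
  then have "g ` {0..1} = {0..1}" unfolding homeomorphism_def by blast
  then show ?thesis using assms(3) by blast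
qed

lemma iter_range:
  assumes "homeo_group01 G" "f \<in> G" "x \<in> {0..1}" shows "(f^^n) x \<in> {0..1}"
proof (induction n)
  case 0 then show ?case using assms(3) by simp
next
  case (Suc n) then show ?case using G_range[OF assms(1,2), of "(f^^n) x"] by simp
qed

lemma iter_in_G:
  assumes "homeo_group01 G" "f \<in> G" shows "\<exists>h\<in>G. \<forall>x\<in>{0..1}. h x = (f^^n) x"
proof (induction n)
  case 0
  have "\<exists>e\<in>G. \<forall>x\<in>{0..1}. e x = x" using assms(1) unfolding homeo_group01_def by (elim conjE)
  then show ?case by simp
next
  case (Suc n)
  then obtain h where h: "h \<in> G" "\<forall>x\<in>{0..1}. h x = (f^^n) x" by blast
  have "\<forall>g\<in>G. \<forall>h\<in>G. \<exists>k\<in>G. \<forall>x\<in>{0..1}. k x = g (h x)"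
    using assms(1) unfolding homeo_group01_def by (elim conjE)
  then obtain k where "k \<in> G" "\<forall>x\<in>{0..1}. k x = f (h x)"
    using assms(2) h(1) by blast
  then show ?case using h by auto
qed

lemma iter_fix: "f c = c \<Longrightarrow> (f^^n) c = c"
  by (induction n) auto

lemma stay_down:
  assumes G: "homeo_group01 G" "f \<in> G" and cd: "0 \<le> c" "c < d" "d \<le> 1" and fc: "f c = c"
    and dn: "\<forall>x\<in>{c<..<d}. f x < x" and x: "x \<in> {c<..<d}"
  shows "(f^^n) x \<in> {c<..<d} \<and> (f^^n) x \<le> x"
proof (induction n)
  case 0 then show ?case using x by auto
next
  case (Suc n)
  let ?u = "(f^^n) x"
  have u: "?u \<in> {c<..<d}" "?u \<le> x" using Suc by auto
  have "f ?u < ?u" using dn u by auto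
  moreover have "f c < f ?u"
  proof -
    have "c \<in> {0..1}" "?u \<in> {0..1}" using u cd by auto
    then show ?thesis using strict_mono_onD[OF G_mono[OF G], of c ?u] u by auto
  qed
  ultimately show ?case using u fc by auto
qed

lemma stay_up:
  assumes G: "homeo_group01 G" "f \<in> G" and cd: "0 \<le> c" "c < d" "d \<le> 1" and fd: "f d = d"
    and up: "\<forall>x\<in>{c<..<d}. x < f x" and x: "x \<in> {c<..<d}"
  shows "(f^^n) x \<in> {c<..<d} \<and> x \<le> (f^^n) x"
proof (induction n)
  case 0 then show ?case using x by auto
next
  case (Suc n)
  let ?u = "(f^^n) x"
  have u: "?u \<in> {c<..<d}" "x \<le> ?u" using Suc by auto
  have "?u < f ?u" using up u by auto
  moreover have "f ?u < f d"
  proof -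
    have "d \<in> {0..1}" "?u \<in> {0..1}" using u cd by auto
    then show ?thesis using strict_mono_onD[OF G_mono[OF G], of ?u d] u by auto
  qed
  ultimately show ?case using u fd by auto
qed

lemma conv_down:
  assumes G: "homeo_group01 G" "f \<in> G" and cd: "0 \<le> c" "c < d" "d \<le> 1" and fc: "f c = c"
    and dn: "\<forall>x\<in>{c<..<d}. f x < x" and x: "x \<in> {c<..<d}" and z: "c < z"
  shows "\<exists>N. (f^^N) x < z"
proof (rule ccontr)
  assume "\<not> ?thesis"
  then have ge: "\<forall>n. z \<le> (f^^n) x" by (auto simp: not_less)
  define s where "s n = (f^^n) x" for n
  have st: "s n \<in> {c<..<d}" for n using stay_down[OF G cd fc dn x] s_def by auto
  have step: "s (Suc n) = f (s n)" for n by (simp add: s_def)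
  have "decseq s"
    by (rule decseq_SucI) (use st dn step in \<open>auto intro: less_imp_le\<close>)
  then obtain L where L: "s \<longlonglongrightarrow> L" "\<forall>i. L \<le> s i"
    using decseq_convergent[of s z] ge s_def by auto
  have Lz: "z \<le> L" using LIMSEQ_le_const[OF L(1), of z] ge s_def by auto
  have Lx: "L \<le> x" using L(2)[rule_format, of 0] s_def by auto
  have Lin: "L \<in> {c<..<d}" using Lz Lx z x by auto
  have "(\<lambda>n. f (s n)) \<longlonglongrightarrow> f L"
  proof (rule continuous_on_tendsto_compose[OF G_cont[OF G] L(1)])
    show "L \<in> {0..1}" using Lin cd by auto
    have "\<forall>n. s n \<in> {0..1}"
    proof
      fix n show "s n \<in> {0..1}" using st[of n] cd by auto
    qed
    then show "\<forall>\<^sub>F n in sequentially. s n \<in> {0..1}" by (rule always_eventually)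
  qed
  moreover have "(\<lambda>n. f (s n)) \<longlonglongrightarrow> L"
    using LIMSEQ_Suc[OF L(1)] step by simp
  ultimately have "f L = L" using LIMSEQ_unique by blast
  moreover have "f L < L" using dn Lin by blast
  ultimately show False by simp
qed

lemma conv_up:
  assumes G: "homeo_group01 G" "f \<in> G" and cd: "0 \<le> c" "c < d" "d \<le> 1" and fd: "f d = d"
    and up: "\<forall>x\<in>{c<..<d}. x < f x" and x: "x \<in> {c<..<d}" and z: "z < d"
  shows "\<exists>N. z < (f^^N) x"
proof (rule ccontr)
  assume "\<not> ?thesis"
  then have ge: "\<forall>n. (f^^n) x \<le> z" by (auto simp: not_less)
  define s where "s n = (f^^n) x" for n
  have st: "s n \<in> {c<..<d}" for n using stay_up[OF G cd fd up x] s_def by auto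
  have step: "s (Suc n) = f (s n)" for n by (simp add: s_def)
  have "incseq s"
    by (rule incseq_SucI) (use st up step in \<open>auto intro: less_imp_le\<close>)
  then obtain L where L: "s \<longlonglongrightarrow> L" "\<forall>i. s i \<le> L"
    using incseq_convergent[of s z] ge s_def by auto
  have Lz: "L \<le> z" using LIMSEQ_le_const2[OF L(1), of z] ge s_def by auto
  have Lx: "x \<le> L" using L(2)[rule_format, of 0] s_def by auto
  have Lin: "L \<in> {c<..<d}" using Lz Lx z x by auto
  have "(\<lambda>n. f (s n)) \<longlonglongrightarrow> f L"
  proof (rule continuous_on_tendsto_compose[OF G_cont[OF G] L(1)])
    show "L \<in> {0..1}" using Lin cd by auto
    have "\<forall>n. s n \<in> {0..1}"
    proof
      fix n show "s n \<in> {0..1}" using st[of n] cd by auto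
    qed
    then show "\<forall>\<^sub>F n in sequentially. s n \<in> {0..1}" by (rule always_eventually)
  qed
  moreover have "(\<lambda>n. f (s n)) \<longlonglongrightarrow> L"
    using LIMSEQ_Suc[OF L(1)] step by simp
  ultimately have "f L = L" using LIMSEQ_unique by blast
  moreover have "L < f L" using up Lin by blast
  ultimately show False by simp
qed


lemma pair_facts:
  assumes "succ_fixed_pair G a b"
  shows "\<exists>g\<in>G. a < b \<and> 0 \<le> a \<and> b \<le> 1 \<and> g a = a \<and> g b = b \<and> (\<forall>x\<in>{a<..<b}. g x \<noteq> x)"
proof -
  obtain g where ab: "a < b" and g: "g \<in> G" and C: "{a<..<b} \<in> components ({0..1} - Fix01 g)"
    using assms unfolding succ_fixed_pair_def by blast
  have sub: "{a<..<b} \<subseteq> {0..1} - Fix01 g" using C in_components_subset by blast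
  have max: "\<And>D. D \<noteq> {} \<Longrightarrow> {a<..<b} \<subseteq> D \<Longrightarrow> D \<subseteq> {0..1} - Fix01 g \<Longrightarrow> connected D \<Longrightarrow> D = {a<..<b}"
    using C unfolding in_components_maximal by blast
  have a0: "0 \<le> a"
  proof (rule ccontr)
    assume "\<not> 0 \<le> a"
    then have "(a + min b 0)/2 \<in> {a<..<b}" "(a + min b 0)/2 < 0" using ab by (auto simp: min_def)
    then have "(a + min b 0)/2 \<in> {0..1}" using sub by blast
    then show False using \<open>(a + min b 0)/2 < 0\<close> by simp
  qed
  have b1: "b \<le> 1"
  proof (rule ccontr)
    assume "\<not> b \<le> 1"
    then have "(max a 1 + b)/2 \<in> {a<..<b}" "1 < (max a 1 + b)/2" using ab by (auto simp: max_def)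
    then have "(max a 1 + b)/2 \<in> {0..1}" using sub by blast
    then show False using \<open>1 < (max a 1 + b)/2\<close> by simp
  qed
  have nf: "\<forall>x\<in>{a<..<b}. g x \<noteq> x" using sub unfolding Fix01_def by auto
  have gb: "g b = b"
  proof (rule ccontr)
    assume "g b \<noteq> b"
    have "{a<..b} = insert b {a<..<b}" using ab by auto
    then have "{a<..b} \<subseteq> {0..1} - Fix01 g" using sub a0 b1 \<open>g b \<noteq> b\<close> ab unfolding Fix01_def by auto
    then have "{a<..b} = {a<..<b}" using max[of "{a<..b}"] ab by (auto simp: subset_iff)
    then show False using ab by auto
  qed
  have ga: "g a = a"
  proof (rule ccontr)
    assume "g a \<noteq> a"
    have "{a..<b} = insert a {a<..<b}" using ab by auto
    then have "{a..<b} \<subseteq> {0..1} - Fix01 g" using sub a0 b1 \<open>g a \<noteq> a\<close> ab unfolding Fix01_def by auto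
    then have "{a..<b} = {a<..<b}" using max[of "{a..<b}"] ab by (auto simp: subset_iff)
    then show False using ab by auto
  qed
  show ?thesis using g ab a0 b1 ga gb nf by blast
qed

lemma sign:
  assumes G: "homeo_group01 G" "f \<in> G" and cd: "0 \<le> c" "c < d" "d \<le> 1"
    and nf: "\<forall>x\<in>{c<..<d}. f x \<noteq> x"
  shows "(\<forall>x\<in>{c<..<d}. f x < x) \<or> (\<forall>x\<in>{c<..<d}. x < f x)"
proof (rule ccontr)
  assume "\<not> ?thesis"
  then obtain x0 x1 where x0: "x0 \<in> {c<..<d}" "x0 < f x0" and x1: "x1 \<in> {c<..<d}" "f x1 < x1"
    using nf by (meson linorder_neqE_linordered_idom)
  have cont: "continuous_on {u..v} (\<lambda>x. f x - x)" if "u \<in> {c<..<d}" "v \<in> {c<..<d}" for u v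
  proof -
    have "continuous_on {u..v} f"
      using continuous_on_subset[OF G_cont[OF G]] that cd by auto
    then show ?thesis by (intro continuous_intros)
  qed
  have "\<exists>x\<in>{c<..<d}. f x - x = 0"
  proof (cases "x0 \<le> x1")
    case True
    then obtain x where "x0 \<le> x" "x \<le> x1" "f x - x = 0"
      using IVT2'[of "\<lambda>x. f x - x" x1 0 x0] x0 x1 cont[OF x0(1) x1(1)] by auto
    then show ?thesis using x0 x1 by auto
  next
    case False
    then obtain x where "x1 \<le> x" "x \<le> x0" "f x - x = 0"
      using IVT'[of "\<lambda>x. f x - x" x1 0 x0] x0 x1 cont[OF x1(1) x0(1)] by auto
    then show ?thesis using x0 x1 by auto
  qed
  then show False using nf by auto
qed

lemma inverse_props:
  assumes G: "homeo_group01 G" "g \<in> G" "k \<in> G" and inv: "\<forall>x\<in>{0..1}. k (g x) = x"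
    and x: "x \<in> {0..1}"
  shows "g x < x \<Longrightarrow> x < k x" "x < g x \<Longrightarrow> k x < x" "g x = x \<Longrightarrow> k x = x"
proof -
  have gx: "g x \<in> {0..1}" using G_range[OF G(1,2) x] .
  have m: "strict_mono_on {0..1} k" using G_mono[OF G(1,3)] .
  show "g x < x \<Longrightarrow> x < k x" using strict_mono_onD[OF m gx x] inv x by auto
  show "x < g x \<Longrightarrow> k x < x" using strict_mono_onD[OF m x gx] inv x by auto
  show "g x = x \<Longrightarrow> k x = x" using inv x by metis
qed

lemma get_inverse:
  assumes "homeo_group01 G" "g \<in> G" shows "\<exists>k\<in>G. \<forall>x\<in>{0..1}. k (g x) = x"
proof -
  have "\<forall>g\<in>G. \<exists>k\<in>G. \<forall>x\<in>{0..1}. k (g x) = x"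
    using assms(1) unfolding homeo_group01_def by (elim conjE)
  then show ?thesis using assms(2) by blast
qed

lemma orient_f:
  assumes G: "homeo_group01 G" "f \<in> G" and cd: "0 \<le> c" "c < d" "d \<le> 1"
    and fc: "f c = c" and fd: "f d = d" and nf: "\<forall>x\<in>{c<..<d}. f x \<noteq> x"
  shows "\<exists>f'\<in>G. f' c = c \<and> f' d = d \<and> (\<forall>x\<in>{c<..<d}. f' x < x)"
    "\<exists>f'\<in>G. f' c = c \<and> f' d = d \<and> (\<forall>x\<in>{c<..<d}. x < f' x)"
proof -
  obtain k where k: "k \<in> G" "\<forall>x\<in>{0..1}. k (f x) = x" using get_inverse[OF G] by blast
  note ip = inverse_props[OF G k]
  have kc: "k c = c" "k d = d" using ip(3) fc fd cd by auto
  have S: "(\<forall>x\<in>{c<..<d}. f x < x) \<or> (\<forall>x\<in>{c<..<d}. x < f x)" using sign[OF G cd nf] .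
  show "\<exists>f'\<in>G. f' c = c \<and> f' d = d \<and> (\<forall>x\<in>{c<..<d}. f' x < x)"
  proof (cases "\<forall>x\<in>{c<..<d}. f x < x")
    case True then show ?thesis using G(2) fc fd by blast
  next
    case False then have A: "\<forall>x\<in>{c<..<d}. x < f x" using S by blast
    show ?thesis using A k(1) kc ip(2) cd by (intro bexI[of _ k]) auto
  qed
  show "\<exists>f'\<in>G. f' c = c \<and> f' d = d \<and> (\<forall>x\<in>{c<..<d}. x < f' x)"
  proof (cases "\<forall>x\<in>{c<..<d}. x < f x")
    case True then show ?thesis using G(2) fc fd by blast
  next
    case False then have A: "\<forall>x\<in>{c<..<d}. f x < x" using S by blast
    show ?thesis using A k(1) kc ip(1) cd by (intro bexI[of _ k]) auto
  qed
qed

lemma orient_g: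
  assumes G: "homeo_group01 G" "g \<in> G" and x0: "x0 \<in> {0..1}" "g x0 \<noteq> x0"
  shows "\<exists>g'\<in>G. x0 < g' x0 \<and> (\<forall>p\<in>{0..1}. g p = p \<longrightarrow> g' p = p)"
    "\<exists>g'\<in>G. g' x0 < x0 \<and> (\<forall>p\<in>{0..1}. g p = p \<longrightarrow> g' p = p)"
proof -
  obtain k where k: "k \<in> G" "\<forall>x\<in>{0..1}. k (g x) = x" using get_inverse[OF G] by blast
  note ip = inverse_props[OF G k]
  have kf: "\<forall>p\<in>{0..1}. g p = p \<longrightarrow> k p = p" using ip(3) by blast
  show "\<exists>g'\<in>G. x0 < g' x0 \<and> (\<forall>p\<in>{0..1}. g p = p \<longrightarrow> g' p = p)"
  proof (cases "x0 < g x0")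
    case True then show ?thesis using G(2) by blast
  next
    case False then have "g x0 < x0" using x0 by auto
    then show ?thesis using ip(1)[OF x0(1)] k(1) kf by blast
  qed
  show "\<exists>g'\<in>G. g' x0 < x0 \<and> (\<forall>p\<in>{0..1}. g p = p \<longrightarrow> g' p = p)"
  proof (cases "g x0 < x0")
    case True then show ?thesis using G(2) by blast
  next
    case False then have "x0 < g x0" using x0 by auto
    then show ?thesis using ip(2)[OF x0(1)] k(1) kf by blast
  qed
qed


abbreviation "CONCL G \<equiv> \<exists>h1\<in>G. \<exists>h2\<in>G. \<exists>p q. 0 \<le> p \<and> p < q \<and> q \<le> 1 \<and>
           h1 ` {p..q} \<subseteq> {p..q} \<and> h2 ` {p..q} \<subseteq> {p..q} \<and>
           h1 ` {p..q} \<inter> h2 ` {p..q} = {}"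

lemma compose_G:
  assumes "homeo_group01 G" "f \<in> G" "g \<in> G"
  shows "\<exists>k\<in>G. \<forall>x\<in>{0..1}. k x = (f^^M) (g x)"
proof -
  obtain h where h: "h \<in> G" "\<forall>x\<in>{0..1}. h x = (f^^M) x" using iter_in_G[OF assms(1,2)] by blast
  have "\<forall>g\<in>G. \<forall>h\<in>G. \<exists>k\<in>G. \<forall>x\<in>{0..1}. k x = g (h x)"
    using assms(1) unfolding homeo_group01_def by (elim conjE)
  then obtain k where "k \<in> G" "\<forall>x\<in>{0..1}. k x = h (g x)"
    using assms(3) h(1) by blast
  then show ?thesis using h G_range[OF assms(1,3)] by auto
qed

lemma coreA:
  assumes G: "homeo_group01 G" "f \<in> G" "g \<in> G" and cd: "0 \<le> c" "c < y" "y < d" "d \<le> 1"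
    and fc: "f c = c" and dn: "\<forall>x\<in>{c<..<d}. f x < x" and gc: "c < g c" and gy: "g y < d"
  shows "CONCL G"
proof -
  have cd': "0 \<le> c" "c < d" "d \<le> 1" using cd by auto
  have c01: "c \<in> {0..1}" "y \<in> {0..1}" using cd by auto
  have gmono: "strict_mono_on {0..1} g" using G_mono[OF G(1,3)] .
  have "g c < g y" using strict_mono_onD[OF gmono c01 cd(2)] .
  then have gyin: "g y \<in> {c<..<d}" and gcin: "g c \<in> {c<..<d}" using gc gy by auto
  obtain M where M: "(f^^M) (g y) < y" using conv_down[OF G(1,2) cd' fc dn gyin cd(2)] by blast
  define u where "u = (f^^M) (g c)"
  have u: "c < u" using stay_down[OF G(1,2) cd' fc dn gcin, of M] u_def by auto
  have yin: "y \<in> {c<..<d}" using cd by auto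
  obtain N where N: "(f^^N) y < u" using conv_down[OF G(1,2) cd' fc dn yin u] by blast
  obtain h1 where h1: "h1 \<in> G" "\<forall>x\<in>{0..1}. h1 x = (f^^N) x" using iter_in_G[OF G(1,2)] by blast
  obtain h2 where h2: "h2 \<in> G" "\<forall>x\<in>{0..1}. h2 x = (f^^M) (g x)" using compose_G[OF G] by blast
  have m1: "strict_mono_on {0..1} h1" using G_mono[OF G(1) h1(1)] .
  have m2: "strict_mono_on {0..1} h2" using G_mono[OF G(1) h2(1)] .
  have h1c: "h1 c = c" using h1(2) c01 iter_fix[of f c, OF fc] by auto
  have h1y: "h1 y < u" using h1(2) c01 N by auto
  have h2c: "h2 c = u" using h2(2) c01 u_def by auto
  have h2y: "h2 y < y" using h2(2) c01 M by auto
  have I: "{c..y} \<subseteq> {0..1}" using cd by auto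
  have A: "h1 x \<in> {c..h1 y}" if "x \<in> {c..y}" for x
    using strict_mono_on_leD[OF m1, of c x] strict_mono_on_leD[OF m1, of x y] that I h1c by auto
  have B: "h2 x \<in> {u..y}" if "x \<in> {c..y}" for x
    using strict_mono_on_leD[OF m2, of c x] strict_mono_on_leD[OF m2, of x y] that I h2c h2y by auto
  have "h1 ` {c..y} \<subseteq> {c..y}" using A h1y u h2y h2c B[of y] cd by fastforce
  moreover have "h2 ` {c..y} \<subseteq> {c..y}" using B u by fastforce
  moreover have "h1 ` {c..y} \<inter> h2 ` {c..y} = {}" using A B h1y by fastforce
  moreover have "0 \<le> c" "c < y" "y \<le> 1" using cd by auto
  ultimately show ?thesis using h1(1) h2(1) by blast
qed

lemma coreB:
  assumes G: "homeo_group01 G" "f \<in> G" "g \<in> G" and cd: "0 \<le> c" "c < y" "y < d" "d \<le> 1"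
    and fd: "f d = d" and up: "\<forall>x\<in>{c<..<d}. x < f x" and gd: "g d < d" and gy: "c < g y"
  shows "CONCL G"
proof -
  have cd': "0 \<le> c" "c < d" "d \<le> 1" using cd by auto
  have c01: "d \<in> {0..1}" "y \<in> {0..1}" using cd by auto
  have gmono: "strict_mono_on {0..1} g" using G_mono[OF G(1,3)] .
  have "g y < g d" using strict_mono_onD[OF gmono c01(2) c01(1) cd(3)] .
  then have gyin: "g y \<in> {c<..<d}" and gdin: "g d \<in> {c<..<d}" using gd gy by auto
  obtain M where M: "y < (f^^M) (g y)" using conv_up[OF G(1,2) cd' fd up gyin cd(3)] by blast
  define u where "u = (f^^M) (g d)"
  have u: "u < d" using stay_up[OF G(1,2) cd' fd up gdin, of M] u_def by auto
  have yin: "y \<in> {c<..<d}" using cd by auto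
  obtain N where N: "u < (f^^N) y" using conv_up[OF G(1,2) cd' fd up yin u] by blast
  obtain h1 where h1: "h1 \<in> G" "\<forall>x\<in>{0..1}. h1 x = (f^^N) x" using iter_in_G[OF G(1,2)] by blast
  obtain h2 where h2: "h2 \<in> G" "\<forall>x\<in>{0..1}. h2 x = (f^^M) (g x)" using compose_G[OF G] by blast
  have m1: "strict_mono_on {0..1} h1" using G_mono[OF G(1) h1(1)] .
  have m2: "strict_mono_on {0..1} h2" using G_mono[OF G(1) h2(1)] .
  have h1d: "h1 d = d" using h1(2) c01 iter_fix[of f d, OF fd] by auto
  have h1y: "u < h1 y" using h1(2) c01 N by auto
  have h2d: "h2 d = u" using h2(2) c01 u_def by auto
  have h2y: "y < h2 y" using h2(2) c01 M by auto
  have I: "{y..d} \<subseteq> {0..1}" using cd by auto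
  have A: "h1 x \<in> {h1 y..d}" if "x \<in> {y..d}" for x
    using strict_mono_on_leD[OF m1, of y x] strict_mono_on_leD[OF m1, of x d] that I h1d by auto
  have B: "h2 x \<in> {y..u}" if "x \<in> {y..d}" for x
    using strict_mono_on_leD[OF m2, of y x] strict_mono_on_leD[OF m2, of x d] that I h2d h2y by auto
  have "h1 ` {y..d} \<subseteq> {y..d}" using A h1y u h2y h2d B[of d] cd by fastforce
  moreover have "h2 ` {y..d} \<subseteq> {y..d}" using B u by fastforce
  moreover have "h1 ` {y..d} \<inter> h2 ` {y..d} = {}" using A B h1y by fastforce
  moreover have "0 \<le> y" "y < d" "d \<le> 1" using cd by auto
  ultimately show ?thesis using h1(1) h2(1) by blast
qed


lemma card_one_cases:
  assumes "card (S \<inter> {c, d}) = 1" "c \<noteq> d"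
  shows "(c \<in> S \<and> d \<notin> S) \<or> (d \<in> S \<and> c \<notin> S)"
  using assms by (cases "c \<in> S"; cases "d \<in> S") (auto simp: Int_insert_right)

lemma main_case:
  assumes G: "homeo_group01 G" and P: "succ_fixed_pair G a b" "succ_fixed_pair G c d"
    and L: "card ({a<..<b} \<inter> {c, d}) = 1"
  shows "CONCL G"
proof -
  obtain g where g: "g \<in> G" "a < b" "0 \<le> a" "b \<le> 1" "g a = a" "g b = b" "\<forall>x\<in>{a<..<b}. g x \<noteq> x"
    using pair_facts[OF P(1)] by blast
  obtain f where f: "f \<in> G" "c < d" "0 \<le> c" "d \<le> 1" "f c = c" "f d = d" "\<forall>x\<in>{c<..<d}. f x \<noteq> x"
    using pair_facts[OF P(2)] by blast
  have cd: "0 \<le> c" "c < d" "d \<le> 1" using f by auto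
  note of = orient_f[OF G f(1) cd f(5,6,7)]
  from card_one_cases[OF L] f(2)
  have "(c \<in> {a<..<b} \<and> d \<notin> {a<..<b}) \<or> (d \<in> {a<..<b} \<and> c \<notin> {a<..<b})" by auto
  then show ?thesis
  proof
    assume A: "c \<in> {a<..<b} \<and> d \<notin> {a<..<b}"
    then have bd: "b \<le> d" "a < c" "c < b" using f(2) by auto
    obtain f' where f': "f' \<in> G" "f' c = c" "\<forall>x\<in>{c<..<d}. f' x < x" using of(1) by blast
    have c01: "c \<in> {0..1}" using cd by auto
    obtain g' where g': "g' \<in> G" "c < g' c" "\<forall>p\<in>{0..1}. g p = p \<longrightarrow> g' p = p"
      using orient_g(1)[OF G g(1) c01] g(7) A by blast
    have g'b: "g' b = b" using g'(3) g(3,4,6) g(2) by auto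
    define y where "y = (c + b) / 2"
    have y: "c < y" "y < b" using y_def bd by auto
    have "g' y < g' b"
      using strict_mono_onD[OF G_mono[OF G g'(1)], of y b] y g(4) cd by auto
    then have "g' y < d" using g'b bd by auto
    then show ?thesis using coreA[OF G f'(1) g'(1) cd(1) y(1) _ cd(3) f'(2,3) g'(2)] y bd by auto
  next
    assume A: "d \<in> {a<..<b} \<and> c \<notin> {a<..<b}"
    then have bd: "c \<le> a" "a < d" "d < b" using f(2) by auto
    obtain f' where f': "f' \<in> G" "f' d = d" "\<forall>x\<in>{c<..<d}. x < f' x" using of(2) by blast
    have d01: "d \<in> {0..1}" using cd by auto
    obtain g' where g': "g' \<in> G" "g' d < d" "\<forall>p\<in>{0..1}. g p = p \<longrightarrow> g' p = p"
      using orient_g(2)[OF G g(1) d01] g(7) A by blast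
    have g'a: "g' a = a" using g'(3) g(3,4,5) g(2) by auto
    define y where "y = (a + d) / 2"
    have y: "a < y" "y < d" using y_def bd by auto
    have "g' a < g' y"
      using strict_mono_onD[OF G_mono[OF G g'(1)], of a y] y g(3) cd by auto
    then have "c < g' y" using g'a bd by auto
    then show ?thesis using coreB[OF G f'(1) g'(1) cd(1) _ y(2) cd(3) f'(2,3) g'(2)] y bd by auto
  qed
qed

theorem lemmal:
  fixes G :: "(real \<Rightarrow> real) set"
  assumes "homeo_group01 G"
    and "has_linked_fixed_points G"
  shows "\<exists>h1\<in>G. \<exists>h2\<in>G. \<exists>p q. 0 \<le> p \<and> p < q \<and> q \<le> 1 \<and>
           h1 ` {p..q} \<subseteq> {p..q} \<and> h2 ` {p..q} \<subseteq> {p..q} \<and>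
           h1 ` {p..q} \<inter> h2 ` {p..q} = {}"
proof -
  obtain a b c d where P: "succ_fixed_pair G a b" "succ_fixed_pair G c d" "linked_pairs a b c d"
    using assms(2) unfolding has_linked_fixed_points_def by blast
  from P(3) show ?thesis unfolding linked_pairs_def
  proof
    assume "card ({a<..<b} \<inter> {c, d}) = 1"
    then show ?thesis using main_case[OF assms(1) P(1,2)] by blast
  next
    assume "card ({c<..<d} \<inter> {a, b}) = 1"
    then show ?thesis using main_case[OF assms(1) P(2,1)] by blast
  qed
qed

end
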